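(* Fix any total budget $\mathrm{TB}\in\mathbb N_0$. For any number game $G$, the unique inverse of $G$ (up to equality of games) is $\bar G$; that is, $G+\bar G=0$, and if $G'$ is any game form with $G+G'=0$ then $G'=\bar G$.
   Context: Game forms are defined recursively: $G=\{G^{\mathcal L}\mid G^{\mathcal R}\}$ with finite sets of Left and Right options, and finite birthday. $0=\{\varnothing\mid\varnothing\}$. The conjugate is $\bar G=\{\overline{G^{\mathcal R}}\mid\overline{G^{\mathcal L}}\}$. The budget set for total budget $\mathrm{TB}$ is $\mathcal B=\{0,\dots,\mathrm{TB},\hat 0,\dots,\widehat{\mathrm{TB}}\}$: state $p$ (resp. $\hat p$) means Left holds $p$ dollars and Right holds $\mathrm{TB}-p$, and Right (resp. Left) holds the tie-breaking marker. Play of $(G,\tilde p)$: at every position (terminal ones included) both players bid simultaneously, Left $\ell\in\{0,\dots,p\}$, Right $r\in\{0,\dots,\mathrm{TB}-p\}$. If Left holds the marker (state $\hat p$): if $\ell>r$ Left moves to $(G^L,\widehat{p-\ell})$, or, including the marker (allowed when $\ell\ge r$), to $(G^L,p-\ell)$; if $\ell=r$ Left wins, the marker passes to Right, play continues at $(G^L,p-\ell)$; if $\ell<r$ Right moves to $(G^R,\widehat{p+r})$. Symmetrically when Right holds the marker (state $p$): if $r>\ell$ Right moves to $(G^R,p+r)$ or, including the marker, to $(G^R,\widehat{p+r})$; if $r=\ell$ Right wins, the marker passes to Left, play continues at $(G^R,\widehat{p+r})$; if $r<\ell$ Left moves to $(G^L,p-\ell)$. A player who wins a bid but has no option loses. $o(G,\tilde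 p)\in\{\mathrm L,\mathrm R\}$ is the winner under optimal play; $\mathrm L>\mathrm R$. Disjunctive sum $G+H=\{G^{\mathcal L}+H,G+H^{\mathcal L}\mid G^{\mathcal R}+H,G+H^{\mathcal R}\}$. $G\ge H$ means $o(G+X,\tilde p)\ge o(H+X,\tilde p)$ for all game forms $X$ and all $\tilde p\in\mathcal B$; $G=H$ means $G\ge H$ and $H\ge G$; $G>H$ means $G\ge H$ and not $H\ge G$. A game form $G$ is a number if all its options are numbers and $G^L<G<G^R$ for all $G^L\in G^{\mathcal L}$, $G^R\in G^{\mathcal R}$. An inverse of $G$ is a game form $G'$ with $G+G'=0$. *)

theory Defs
  imports "HOL-Library.FSet"
begin

text \<open>Game forms: finite sets of Left and Right options; finite birthday is
automatic since the datatype is inductive.\<close>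
datatype game = Game (lopts: "game fset") (ropts: "game fset")

definition zero_game :: game where
  "zero_game = Game {||} {||}"

lemma game_lopt_size_less: "g |\<in>| L \<Longrightarrow> size g < size (Game L R)"
proof -
  assume "g |\<in>| L"
  then have "Suc (size g) \<le> (\<Sum>x\<in>fset L. Suc (size x))"
    by (intro member_le_sum) auto
  then show ?thesis by simp
qed

lemma game_ropt_size_less: "g |\<in>| R \<Longrightarrow> size g < size (Game L R)"
proof -
  assume "g |\<in>| R"
  then have "Suc (size g) \<le> (\<Sum>x\<in>fset R. Suc (size x))"
    by (intro member_le_sum) auto
  then show ?thesis by simp
qed

primrec conj_game :: "game \<Rightarrow> game" where
  "conj_game (Game L R) = Game (fimage conj_game R) (fimage conj_game L)"

function (sequential) gsum :: "game \<Rightarrow> game \<Rightarrow> game" where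
  "gsum (Game GL GR) (Game HL HR) =
     Game ((\<lambda>g. gsum g (Game HL HR)) |`| GL |\<union>| (\<lambda>h. gsum (Game GL GR) h) |`| HL)
          ((\<lambda>g. gsum g (Game HL HR)) |`| GR |\<union>| (\<lambda>h. gsum (Game GL GR) h) |`| HR)"
  by pat_completeness auto
termination
  by (relation "measure (\<lambda>(g, h). size g + size h)")
     (auto dest: game_lopt_size_less game_ropt_size_less)

text \<open>A budget state is a pair (p, lm): Left holds p dollars, Right holds TB - p;
  lm = True means Left holds the tie-breaking marker (state \<open>p-hat\<close>),
  lm = False means Right holds it (state \<open>p\<close>).
  \<open>left_wins TB G p lm\<close> holds iff the outcome of (G, state) is L,
  i.e. Left has a strategy guaranteeing a win: Left can choose a bid l such that
  for every Right bid r the resulting continuation is won by Left.\<close>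
function (sequential) left_wins :: "nat \<Rightarrow> game \<Rightarrow> nat \<Rightarrow> bool \<Rightarrow> bool" where
  "left_wins TB (Game L R) p True =
     (\<exists>l\<le>p. \<forall>r\<le>TB - p.
        (if r < l then (\<exists>g\<in>fset L. (left_wins TB g (p - l) True \<or> left_wins TB g (p - l) False))
         else if r = l then (\<exists>g\<in>fset L. left_wins TB g (p - l) False)
         else (\<forall>g\<in>fset R. left_wins TB g (p + r) True)))"
| "left_wins TB (Game L R) p False =
     (\<exists>l\<le>p. \<forall>r\<le>TB - p.
        (if l < r then (\<forall>g\<in>fset R. left_wins TB g (p + r) False \<and> left_wins TB g (p + r) True)
         else if l = r then (\<forall>g\<in>fset R. left_wins TB g (p + r) True)
         else (\<exists>g\<in>fset L. left_wins TB g (p - l) False)))"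
  by pat_completeness auto
termination
  by (relation "measure (\<lambda>(_, g, _, _). size g)")
     (auto dest: game_lopt_size_less game_ropt_size_less)

text \<open>Outcomes: True = L, False = R, with L > R.
  \<open>G \<ge> H\<close>: for all game forms X and all budget states in the budget set,
  o(G+X) \<ge> o(H+X).\<close>
definition game_ge :: "nat \<Rightarrow> game \<Rightarrow> game \<Rightarrow> bool" where
  "game_ge TB G H =
     (\<forall>X p lm. p \<le> TB \<longrightarrow> left_wins TB (gsum H X) p lm \<longrightarrow> left_wins TB (gsum G X) p lm)"

definition game_eq :: "nat \<Rightarrow> game \<Rightarrow> game \<Rightarrow> bool" where
  "game_eq TB G H = (game_ge TB G H \<and> game_ge TB H G)"

definition game_less :: "nat \<Rightarrow> game \<Rightarrow> game \<Rightarrow> bool" where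
  "game_less TB G H = (game_ge TB H G \<and> \<not> game_ge TB G H)"

function (sequential) is_number :: "nat \<Rightarrow> game \<Rightarrow> bool" where
  "is_number TB (Game L R) =
     ((\<forall>g\<in>fset L. is_number TB g) \<and> (\<forall>g\<in>fset R. is_number TB g) \<and>
      (\<forall>gl\<in>fset L. game_less TB gl (Game L R)) \<and>
      (\<forall>gr\<in>fset R. game_less TB (Game L R) gr))"
  by pat_completeness auto
termination
  by (relation "measure (\<lambda>(_, g). size g)")
     (auto dest: game_lopt_size_less game_ropt_size_less)

end

theory Submission
  imports Defs
begin

lemma lopts_gsum: "lopts (gsum A B) = (\<lambda>g. gsum g B) |`| lopts A |\<union>| (\<lambda>h. gsum A h) |`| lopts B"
  by (cases A; cases B) simp
lemma ropts_gsum: "ropts (gsum A B) = (\<lambda>g. gsum g B) |`| ropts A |\<union>| (\<lambda>h. gsum A h) |`| ropts B"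
  by (cases A; cases B) simp
lemma lopts_conj: "lopts (conj_game A) = conj_game |`| ropts A"
  by (cases A) simp
lemma ropts_conj: "ropts (conj_game A) = conj_game |`| lopts A"
  by (cases A) simp

lemma lw_T: "left_wins TB X p True =
     (\<exists>l\<le>p. \<forall>r\<le>TB - p.
        (if r < l then (\<exists>g\<in>fset (lopts X). (left_wins TB g (p - l) True \<or> left_wins TB g (p - l) False))
         else if r = l then (\<exists>g\<in>fset (lopts X). left_wins TB g (p - l) False)
         else (\<forall>g\<in>fset (ropts X). left_wins TB g (p + r) True)))"
  by (cases X) simp
lemma lw_F: "left_wins TB X p False =
     (\<exists>l\<le>p. \<forall>r\<le>TB - p.
        (if l < r then (\<forall>g\<in>fset (ropts X). left_wins TB g (p + r) False \<and> left_wins TB g (p + r) True)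
         else if l = r then (\<forall>g\<in>fset (ropts X). left_wins TB g (p + r) True)
         else (\<exists>g\<in>fset (lopts X). left_wins TB g (p - l) False)))"
  by (cases X) simp
lemma is_number_unfold: "is_number TB G =
     ((\<forall>g\<in>fset (lopts G). is_number TB g) \<and> (\<forall>g\<in>fset (ropts G). is_number TB g) \<and>
      (\<forall>gl\<in>fset (lopts G). game_less TB gl G) \<and>
      (\<forall>gr\<in>fset (ropts G). game_less TB G gr))"
  by (cases G) simp
lemma size_l: "g |\<in>| lopts X \<Longrightarrow> size g < size X"
  by (cases X) (auto dest: game_lopt_size_less)
lemma size_r: "g |\<in>| ropts X \<Longrightarrow> size g < size X"
  by (cases X) (auto dest: game_ropt_size_less)

lemma gsum_zero: "gsum zero_game X = X"
proof (induction X)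
  case (Game L R)
  have "gsum (Game {||} {||}) (Game L R) = Game ((\<lambda>h. gsum (Game {||} {||}) h) |`| L) ((\<lambda>h. gsum (Game {||} {||}) h) |`| R)"
    by simp
  also have "\<dots> = Game L R" using Game.IH
    by (metis fimage_ident fset.map_cong0 zero_game_def)
  finally show ?case unfolding zero_game_def .
qed

lemma gsum_comm: "gsum A B = gsum B A"
proof (induction "size A + size B" arbitrary: A B rule: less_induct)
  case less
  obtain AL AR where A: "A = Game AL AR" by (cases A)
  obtain BL BR where B: "B = Game BL BR" by (cases B)
  have l1: "(\<lambda>g. gsum g B) |`| AL = (\<lambda>g. gsum B g) |`| AL"
    by (rule fimage_cong) (auto intro!: less simp: A dest: game_lopt_size_less)
  have l2: "(\<lambda>g. gsum A g) |`| BL = (\<lambda>g. gsum g A) |`| BL"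
    by (rule fimage_cong) (auto intro!: less simp: B dest: game_lopt_size_less)
  have r1: "(\<lambda>g. gsum g B) |`| AR = (\<lambda>g. gsum B g) |`| AR"
    by (rule fimage_cong) (auto intro!: less simp: A dest: game_ropt_size_less)
  have r2: "(\<lambda>g. gsum A g) |`| BR = (\<lambda>g. gsum g A) |`| BR"
    by (rule fimage_cong) (auto intro!: less simp: B dest: game_ropt_size_less)
  show ?case using l1 l2 r1 r2 unfolding A B by (simp add: funion_commute)
qed


lemma gsum_assoc: "gsum (gsum A B) C = gsum A (gsum B C)"
proof (induction "size A + size B + size C" arbitrary: A B C rule: less_induct)
  case less
  have sA: "\<And>g. g |\<in>| lopts A \<or> g |\<in>| ropts A \<Longrightarrow> size g < size A" using size_l size_r by blast
  have sB: "\<And>g. g |\<in>| lopts B \<or> g |\<in>| ropts B \<Longrightarrow> size g < size B" using size_l size_r by blast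
  have sC: "\<And>g. g |\<in>| lopts C \<or> g |\<in>| ropts C \<Longrightarrow> size g < size C" using size_l size_r by blast
  have L: "lopts (gsum (gsum A B) C) = lopts (gsum A (gsum B C))"
    unfolding lopts_gsum fimage_funion
    apply (simp add: fimage_fimage funion_assoc o_def)
    using less sA sB sC
    by (smt (verit, best) add.commute add_less_mono1 fimage_cong nat_add_left_cancel_less)
  have R: "ropts (gsum (gsum A B) C) = ropts (gsum A (gsum B C))"
    unfolding ropts_gsum fimage_funion
    apply (simp add: fimage_fimage funion_assoc o_def)
    using less sA sB sC
    by (smt (verit, best) add.commute add_less_mono1 fimage_cong nat_add_left_cancel_less)
  show ?case using L R by (metis game.collapse)
qed

definition cT :: "nat \<Rightarrow> game \<Rightarrow> nat \<Rightarrow> nat \<Rightarrow> nat \<Rightarrow> bool" where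
  "cT TB X p l r = (if r < l then (\<exists>g\<in>fset (lopts X). (left_wins TB g (p - l) True \<or> left_wins TB g (p - l) False))
         else if r = l then (\<exists>g\<in>fset (lopts X). left_wins TB g (p - l) False)
         else (\<forall>g\<in>fset (ropts X). left_wins TB g (p + r) True))"
definition cF :: "nat \<Rightarrow> game \<Rightarrow> nat \<Rightarrow> nat \<Rightarrow> nat \<Rightarrow> bool" where
  "cF TB X p l r = (if l < r then (\<forall>g\<in>fset (ropts X). left_wins TB g (p + r) False \<and> left_wins TB g (p + r) True)
         else if l = r then (\<forall>g\<in>fset (ropts X). left_wins TB g (p + r) True)
         else (\<exists>g\<in>fset (lopts X). left_wins TB g (p - l) False))"

lemma lwT: "left_wins TB X p True = (\<exists>l\<le>p. \<forall>r\<le>TB - p. cT TB X p l r)"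
  unfolding cT_def by (rule lw_T)
lemma lwF: "left_wins TB X p False = (\<exists>l\<le>p. \<forall>r\<le>TB - p. cF TB X p l r)"
  unfolding cF_def by (rule lw_F)

lemma cT_lt: "r < l \<Longrightarrow> cT TB X p l r = (\<exists>g\<in>fset (lopts X). (left_wins TB g (p - l) True \<or> left_wins TB g (p - l) False))"
  by (simp add: cT_def)
lemma cT_eq: "r = l \<Longrightarrow> cT TB X p l r = (\<exists>g\<in>fset (lopts X). left_wins TB g (p - l) False)"
  by (simp add: cT_def)
lemma cT_gt: "l < r \<Longrightarrow> cT TB X p l r = (\<forall>g\<in>fset (ropts X). left_wins TB g (p + r) True)"
  by (simp add: cT_def)
lemma cF_lt: "l < r \<Longrightarrow> cF TB X p l r = (\<forall>g\<in>fset (ropts X). left_wins TB g (p + r) False \<and> left_wins TB g (p + r) True)"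
  by (simp add: cF_def)
lemma cF_eq: "r = l \<Longrightarrow> cF TB X p l r = (\<forall>g\<in>fset (ropts X). left_wins TB g (p + r) True)"
  by (simp add: cF_def)
lemma cF_gt: "r < l \<Longrightarrow> cF TB X p l r = (\<exists>g\<in>fset (lopts X). left_wins TB g (p - l) False)"
  by (simp add: cF_def)

lemma three_cases: obtains "r < (l::nat)" | "r = l" | "l < r" using linorder_cases by blast

lemma lw_mono: "p \<le> p' \<Longrightarrow> p' \<le> TB \<Longrightarrow> left_wins TB X p lm \<Longrightarrow> left_wins TB X p' lm"
proof (induction "size X" arbitrary: X p p' lm rule: less_induct)
  case less
  have IH: "\<And>g q q' lm. g |\<in>| lopts X \<or> g |\<in>| ropts X \<Longrightarrow> q \<le> q' \<Longrightarrow> q' \<le> TB \<Longrightarrow> left_wins TB g q lm \<Longrightarrow> left_wins TB g q' lm"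
  proof -
    fix g q q' lm assume "g |\<in>| lopts X \<or> g |\<in>| ropts X" "q \<le> q'" "q' \<le> TB" "left_wins TB g q lm"
    moreover have "size g < size X" using size_l size_r calculation(1) by blast
    ultimately show "left_wins TB g q' lm" using less.hyps by blast
  qed
  show ?case
  proof (cases lm)
    case True
    have "left_wins TB X p True" using less.prems(3) True by simp
    then obtain l where l: "l \<le> p" and H: "\<And>r. r \<le> TB - p \<Longrightarrow> cT TB X p l r"
      unfolding lwT by blast
    have "cT TB X p' l r" if r: "r \<le> TB - p'" for r
    proof -
      from r have r': "r \<le> TB - p" using less.prems by linarith
      have a: "p - l \<le> p' - l" "p' - l \<le> TB" "p + r \<le> p' + r" "p' + r \<le> TB" using less.prems r by auto
      note Hr = H[OF r']
      show ?thesis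
      proof (cases r l rule: three_cases)
        case 1
        then obtain g where g: "g |\<in>| lopts X" "left_wins TB g (p - l) True \<or> left_wins TB g (p - l) False"
          using Hr unfolding cT_lt[OF 1] by blast
        then have "left_wins TB g (p' - l) True \<or> left_wins TB g (p' - l) False" using IH[of g] a by blast
        then show ?thesis using g unfolding cT_lt[OF 1] by blast
      next
        case 2
        then obtain g where g: "g |\<in>| lopts X" "left_wins TB g (p - l) False"
          using Hr unfolding cT_eq[OF 2] by blast
        then have "left_wins TB g (p' - l) False" using IH[of g] a by blast
        then show ?thesis using g unfolding cT_eq[OF 2] by blast
      next
        case 3
        then have "\<forall>g\<in>fset (ropts X). left_wins TB g (p + r) True" using Hr unfolding cT_gt[OF 3] by blast
        then have "\<forall>g\<in>fset (ropts X). left_wins TB g (p' + r) True" using IH a by blast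
        then show ?thesis unfolding cT_gt[OF 3] by blast
      qed
    qed
    then have "left_wins TB X p' True" unfolding lwT using l less.prems by (intro exI[of _ l]) auto
    then show ?thesis using True by simp
  next
    case False
    have "left_wins TB X p False" using less.prems(3) False by simp
    then obtain l where l: "l \<le> p" and H: "\<And>r. r \<le> TB - p \<Longrightarrow> cF TB X p l r"
      unfolding lwF by blast
    have "cF TB X p' l r" if r: "r \<le> TB - p'" for r
    proof -
      from r have r': "r \<le> TB - p" using less.prems by linarith
      have a: "p - l \<le> p' - l" "p' - l \<le> TB" "p + r \<le> p' + r" "p' + r \<le> TB" using less.prems r by auto
      note Hr = H[OF r']
      show ?thesis
      proof (cases r l rule: three_cases)
        case 1
        then obtain g where g: "g |\<in>| lopts X" "left_wins TB g (p - l) False"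
          using Hr unfolding cF_gt[OF 1] by blast
        then have "left_wins TB g (p' - l) False" using IH[of g] a by blast
        then show ?thesis using g unfolding cF_gt[OF 1] by blast
      next
        case 2
        then have "\<forall>g\<in>fset (ropts X). left_wins TB g (p + r) True" using Hr unfolding cF_eq[OF 2] by blast
        then have "\<forall>g\<in>fset (ropts X). left_wins TB g (p' + r) True" using IH a by blast
        then show ?thesis unfolding cF_eq[OF 2] by blast
      next
        case 3
        then have "\<forall>g\<in>fset (ropts X). left_wins TB g (p + r) False \<and> left_wins TB g (p + r) True" using Hr unfolding cF_lt[OF 3] by blast
        then have "\<forall>g\<in>fset (ropts X). left_wins TB g (p' + r) False \<and> left_wins TB g (p' + r) True" using IH a by blast
        then show ?thesis unfolding cF_lt[OF 3] by blast
      qed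
    qed
    then have "left_wins TB X p' False" unfolding lwF using l less.prems by (intro exI[of _ l]) auto
    then show ?thesis using False by simp
  qed
qed

lemma mem_l1: "YL |\<in>| lopts Y \<Longrightarrow> gsum YL X |\<in>| lopts (gsum Y X)" by (simp add: lopts_gsum)
lemma mem_l2: "XL |\<in>| lopts X \<Longrightarrow> gsum Y XL |\<in>| lopts (gsum Y X)" by (simp add: lopts_gsum)
lemma mem_r1: "YR |\<in>| ropts Y \<Longrightarrow> gsum YR X |\<in>| ropts (gsum Y X)" by (simp add: ropts_gsum)
lemma mem_r2: "XR |\<in>| ropts X \<Longrightarrow> gsum Y XR |\<in>| ropts (gsum Y X)" by (simp add: ropts_gsum)
lemma lopts_cases: "g |\<in>| lopts (gsum Y X) \<Longrightarrow> (\<And>YL. YL |\<in>| lopts Y \<Longrightarrow> g = gsum YL X \<Longrightarrow> P) \<Longrightarrow> (\<And>XL. XL |\<in>| lopts X \<Longrightarrow> g = gsum Y XL \<Longrightarrow> P) \<Longrightarrow> P"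
  by (auto simp: lopts_gsum)
lemma ropts_cases: "g |\<in>| ropts (gsum Y X) \<Longrightarrow> (\<And>YR. YR |\<in>| ropts Y \<Longrightarrow> g = gsum YR X \<Longrightarrow> P) \<Longrightarrow> (\<And>XR. XR |\<in>| ropts X \<Longrightarrow> g = gsum Y XR \<Longrightarrow> P) \<Longrightarrow> P"
  by (auto simp: ropts_gsum)

lemma stepA_T:
  assumes X: "left_wins TB X p True" and pTB: "p \<le> TB"
  and pos: "\<And>X' q lm. X' |\<in>| lopts X \<or> X' |\<in>| ropts X \<Longrightarrow> q \<le> TB \<Longrightarrow> left_wins TB X' q lm \<Longrightarrow> left_wins TB (gsum Y X') q lm"
  and rY: "\<And>YR r. YR |\<in>| ropts Y \<Longrightarrow> 0 < r \<Longrightarrow> p + r \<le> TB \<Longrightarrow> left_wins TB (gsum YR X) (p + r) True"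
  shows "left_wins TB (gsum Y X) p True"
proof -
  obtain l where l: "l \<le> p" and H: "\<And>r. r \<le> TB - p \<Longrightarrow> cT TB X p l r"
    using X unfolding lwT by blast
  have "cT TB (gsum Y X) p l r" if r: "r \<le> TB - p" for r
  proof (cases r l rule: three_cases)
    case 1
    then obtain g where g: "g |\<in>| lopts X" "left_wins TB g (p - l) True \<or> left_wins TB g (p - l) False"
      using H[OF r] unfolding cT_lt[OF 1] by blast
    then have "left_wins TB (gsum Y g) (p - l) True \<or> left_wins TB (gsum Y g) (p - l) False"
      using pos[of g "p - l"] pTB by auto
    then show ?thesis unfolding cT_lt[OF 1] using mem_l2[OF g(1)] by blast
  next
    case 2
    then obtain g where g: "g |\<in>| lopts X" "left_wins TB g (p - l) False"
      using H[OF r] unfolding cT_eq[OF 2] by blast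
    then have "left_wins TB (gsum Y g) (p - l) False"
      using pos[of g "p - l"] pTB by auto
    then show ?thesis unfolding cT_eq[OF 2] using mem_l2[OF g(1)] by blast
  next
    case 3
    have HR: "\<forall>g\<in>fset (ropts X). left_wins TB g (p + r) True" using H[OF r] unfolding cT_gt[OF 3] .
    have "left_wins TB g (p + r) True" if g: "g |\<in>| ropts (gsum Y X)" for g
    proof (rule ropts_cases[OF g])
      fix YR assume "YR |\<in>| ropts Y" "g = gsum YR X"
      then show ?thesis using rY[of YR r] 3 r pTB by auto
    next
      fix XR assume "XR |\<in>| ropts X" "g = gsum Y XR"
      then show ?thesis using pos[of XR "p + r"] HR r pTB by auto
    qed
    then show ?thesis unfolding cT_gt[OF 3] by blast
  qed
  then show ?thesis unfolding lwT using l by blast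
qed

lemma stepA_F:
  assumes X: "left_wins TB X p False" and pTB: "p \<le> TB"
  and pos: "\<And>X' q lm. X' |\<in>| lopts X \<or> X' |\<in>| ropts X \<Longrightarrow> q \<le> TB \<Longrightarrow> left_wins TB X' q lm \<Longrightarrow> left_wins TB (gsum Y X') q lm"
  and rY: "\<And>YR r. YR |\<in>| ropts Y \<Longrightarrow> p + r \<le> TB \<Longrightarrow> left_wins TB (gsum YR X) (p + r) True"
  and rYF: "\<And>YR r. YR |\<in>| ropts Y \<Longrightarrow> 0 < r \<Longrightarrow> p + r \<le> TB \<Longrightarrow> left_wins TB (gsum YR X) (p + r) False"
  shows "left_wins TB (gsum Y X) p False"
proof -
  obtain l where l: "l \<le> p" and H: "\<And>r. r \<le> TB - p \<Longrightarrow> cF TB X p l r"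
    using X unfolding lwF by blast
  have "cF TB (gsum Y X) p l r" if r: "r \<le> TB - p" for r
  proof (cases r l rule: three_cases)
    case 1
    then obtain g where g: "g |\<in>| lopts X" "left_wins TB g (p - l) False"
      using H[OF r] unfolding cF_gt[OF 1] by blast
    then have "left_wins TB (gsum Y g) (p - l) False"
      using pos[of g "p - l"] pTB by auto
    then show ?thesis unfolding cF_gt[OF 1] using mem_l2[OF g(1)] by blast
  next
    case 2
    have HR: "\<forall>g\<in>fset (ropts X). left_wins TB g (p + r) True" using H[OF r] unfolding cF_eq[OF 2] .
    have "left_wins TB g (p + r) True" if g: "g |\<in>| ropts (gsum Y X)" for g
    proof (rule ropts_cases[OF g])
      fix YR assume "YR |\<in>| ropts Y" "g = gsum YR X"
      then show ?thesis using rY[of YR r] r pTB by auto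
    next
      fix XR assume "XR |\<in>| ropts X" "g = gsum Y XR"
      then show ?thesis using pos[of XR "p + r"] HR r pTB by auto
    qed
    then show ?thesis unfolding cF_eq[OF 2] by blast
  next
    case 3
    have HR: "\<forall>g\<in>fset (ropts X). left_wins TB g (p + r) False \<and> left_wins TB g (p + r) True" using H[OF r] unfolding cF_lt[OF 3] .
    have "left_wins TB g (p + r) False \<and> left_wins TB g (p + r) True" if g: "g |\<in>| ropts (gsum Y X)" for g
    proof (rule ropts_cases[OF g])
      fix YR assume "YR |\<in>| ropts Y" "g = gsum YR X"
      then show ?thesis using rY[of YR r] rYF[of YR r] 3 r pTB by auto
    next
      fix XR assume "XR |\<in>| ropts X" "g = gsum Y XR"
      then show ?thesis using pos[of XR "p + r"] HR r pTB by auto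
    qed
    then show ?thesis unfolding cF_lt[OF 3] by blast
  qed
  then show ?thesis unfolding lwF using l by blast
qed

lemma stepFlip:
  assumes X: "left_wins TB X p False" and pTB: "p \<le> TB"
  and pos: "\<And>X' q lm. X' |\<in>| lopts X \<or> X' |\<in>| ropts X \<Longrightarrow> q \<le> TB \<Longrightarrow> left_wins TB X' q lm \<Longrightarrow> left_wins TB (gsum Y X') q lm"
  and tmp: "YL |\<in>| lopts Y" "left_wins TB (gsum YL X) p False"
  and rY: "\<And>YR r. YR |\<in>| ropts Y \<Longrightarrow> 0 < r \<Longrightarrow> p + r \<le> TB \<Longrightarrow> left_wins TB (gsum YR X) (p + r) True"
  shows "left_wins TB (gsum Y X) p True"
proof -
  obtain l where l: "l \<le> p" and H: "\<And>r. r \<le> TB - p \<Longrightarrow> cF TB X p l r"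
    using X unfolding lwF by blast
  have "cT TB (gsum Y X) p l r" if r: "r \<le> TB - p" for r
  proof (cases r l rule: three_cases)
    case 1
    then obtain g where g: "g |\<in>| lopts X" "left_wins TB g (p - l) False"
      using H[OF r] unfolding cF_gt[OF 1] by blast
    then have "left_wins TB (gsum Y g) (p - l) False"
      using pos[of g "p - l"] pTB by auto
    then show ?thesis unfolding cT_lt[OF 1] using mem_l2[OF g(1)] by blast
  next
    case 2
    show ?thesis
    proof (cases "l = 0")
      case True
      then show ?thesis unfolding cT_eq[OF 2] using mem_l1[OF tmp(1)] tmp(2) by auto
    next
      case False
      then have "0 < l" "0 \<le> TB - p" by auto
      then obtain g where g: "g |\<in>| lopts X" "left_wins TB g (p - l) False"
        using H[of 0] unfolding cF_gt[OF \<open>0 < l\<close>] by blast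
      then have "left_wins TB (gsum Y g) (p - l) False"
        using pos[of g "p - l"] pTB by auto
      then show ?thesis unfolding cT_eq[OF 2] using mem_l2[OF g(1)] by blast
    qed
  next
    case 3
    have HR: "\<forall>g\<in>fset (ropts X). left_wins TB g (p + r) False \<and> left_wins TB g (p + r) True" using H[OF r] unfolding cF_lt[OF 3] .
    have "left_wins TB g (p + r) True" if g: "g |\<in>| ropts (gsum Y X)" for g
    proof (rule ropts_cases[OF g])
      fix YR assume "YR |\<in>| ropts Y" "g = gsum YR X"
      then show ?thesis using rY[of YR r] 3 r pTB by auto
    next
      fix XR assume "XR |\<in>| ropts X" "g = gsum Y XR"
      then show ?thesis using pos[of XR "p + r"] HR r pTB by auto
    qed
    then show ?thesis unfolding cT_gt[OF 3] by blast
  qed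
  then show ?thesis unfolding lwT using l by blast
qed

lemma nlwT: "(\<not> left_wins TB X p True) = (\<forall>l\<le>p. \<exists>r\<le>TB - p. \<not> cT TB X p l r)"
  unfolding lwT by blast
lemma nlwF: "(\<not> left_wins TB X p False) = (\<forall>l\<le>p. \<exists>r\<le>TB - p. \<not> cF TB X p l r)"
  unfolding lwF by blast

lemma dstepA_F:
  assumes X: "\<not> left_wins TB X p False" and pTB: "p \<le> TB"
  and pos: "\<And>X' q lm. X' |\<in>| lopts X \<or> X' |\<in>| ropts X \<Longrightarrow> q \<le> TB \<Longrightarrow> \<not> left_wins TB X' q lm \<Longrightarrow> \<not> left_wins TB (gsum Y X') q lm"
  and lY: "\<And>YL l. YL |\<in>| lopts Y \<Longrightarrow> 0 < l \<Longrightarrow> l \<le> p \<Longrightarrow> \<not> left_wins TB (gsum YL X) (p - l) False"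
  shows "\<not> left_wins TB (gsum Y X) p False"
  unfolding nlwF
proof (intro allI impI)
  fix l assume l: "l \<le> p"
  then obtain r where r: "r \<le> TB - p" and H: "\<not> cF TB X p l r" using X unfolding nlwF by blast
  have "\<not> cF TB (gsum Y X) p l r"
  proof (cases r l rule: three_cases)
    case 1
    have HL: "\<not> left_wins TB g (p - l) False" if "g |\<in>| lopts X" for g
      using H that unfolding cF_gt[OF 1] by blast
    have "\<not> left_wins TB g (p - l) False" if g: "g |\<in>| lopts (gsum Y X)" for g
    proof (rule lopts_cases[OF g])
      fix YL assume "YL |\<in>| lopts Y" "g = gsum YL X"
      then show ?thesis using lY[of YL l] 1 l by auto
    next
      fix XL assume "XL |\<in>| lopts X" "g = gsum Y XL"
      then show ?thesis using pos[of XL "p - l"] HL pTB by auto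
    qed
    then show ?thesis unfolding cF_gt[OF 1] by blast
  next
    case 2
    then obtain g where g: "g |\<in>| ropts X" "\<not> left_wins TB g (p + r) True"
      using H unfolding cF_eq[OF 2] by blast
    then have "\<not> left_wins TB (gsum Y g) (p + r) True"
      using pos[of g "p + r"] pTB r by auto
    then show ?thesis unfolding cF_eq[OF 2] using mem_r2[OF g(1)] by blast
  next
    case 3
    then obtain g where g: "g |\<in>| ropts X" "\<not> left_wins TB g (p + r) False \<or> \<not> left_wins TB g (p + r) True"
      using H unfolding cF_lt[OF 3] by blast
    then have "\<not> left_wins TB (gsum Y g) (p + r) False \<or> \<not> left_wins TB (gsum Y g) (p + r) True"
      using pos[of g "p + r"] pTB r by auto
    then show ?thesis unfolding cF_lt[OF 3] using mem_r2[OF g(1)] by blast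
  qed
  then show "\<exists>r\<le>TB - p. \<not> cF TB (gsum Y X) p l r" using r by blast
qed

lemma dstepA_T:
  assumes X: "\<not> left_wins TB X p True" and pTB: "p \<le> TB"
  and pos: "\<And>X' q lm. X' |\<in>| lopts X \<or> X' |\<in>| ropts X \<Longrightarrow> q \<le> TB \<Longrightarrow> \<not> left_wins TB X' q lm \<Longrightarrow> \<not> left_wins TB (gsum Y X') q lm"
  and lY: "\<And>YL l. YL |\<in>| lopts Y \<Longrightarrow> l \<le> p \<Longrightarrow> \<not> left_wins TB (gsum YL X) (p - l) False"
  and lYT: "\<And>YL l. YL |\<in>| lopts Y \<Longrightarrow> 0 < l \<Longrightarrow> l \<le> p \<Longrightarrow> \<not> left_wins TB (gsum YL X) (p - l) True"
  shows "\<not> left_wins TB (gsum Y X) p True"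
  unfolding nlwT
proof (intro allI impI)
  fix l assume l: "l \<le> p"
  then obtain r where r: "r \<le> TB - p" and H: "\<not> cT TB X p l r" using X unfolding nlwT by blast
  have "\<not> cT TB (gsum Y X) p l r"
  proof (cases r l rule: three_cases)
    case 1
    have HL: "\<not> left_wins TB g (p - l) True \<and> \<not> left_wins TB g (p - l) False" if "g |\<in>| lopts X" for g
      using H that unfolding cT_lt[OF 1] by blast
    have "\<not> left_wins TB g (p - l) True \<and> \<not> left_wins TB g (p - l) False" if g: "g |\<in>| lopts (gsum Y X)" for g
    proof (rule lopts_cases[OF g])
      fix YL assume "YL |\<in>| lopts Y" "g = gsum YL X"
      then show ?thesis using lY[of YL l] lYT[of YL l] 1 l by auto
    next
      fix XL assume "XL |\<in>| lopts X" "g = gsum Y XL"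
      then show ?thesis using pos[of XL "p - l"] HL pTB by auto
    qed
    then show ?thesis unfolding cT_lt[OF 1] by blast
  next
    case 2
    have HL: "\<not> left_wins TB g (p - l) False" if "g |\<in>| lopts X" for g
      using H that unfolding cT_eq[OF 2] by blast
    have "\<not> left_wins TB g (p - l) False" if g: "g |\<in>| lopts (gsum Y X)" for g
    proof (rule lopts_cases[OF g])
      fix YL assume "YL |\<in>| lopts Y" "g = gsum YL X"
      then show ?thesis using lY[of YL l] l by auto
    next
      fix XL assume "XL |\<in>| lopts X" "g = gsum Y XL"
      then show ?thesis using pos[of XL "p - l"] HL pTB by auto
    qed
    then show ?thesis unfolding cT_eq[OF 2] by blast
  next
    case 3
    then obtain g where g: "g |\<in>| ropts X" "\<not> left_wins TB g (p + r) True"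
      using H unfolding cT_gt[OF 3] by blast
    then have "\<not> left_wins TB (gsum Y g) (p + r) True"
      using pos[of g "p + r"] pTB r by auto
    then show ?thesis unfolding cT_gt[OF 3] using mem_r2[OF g(1)] by blast
  qed
  then show "\<exists>r\<le>TB - p. \<not> cT TB (gsum Y X) p l r" using r by blast
qed

lemma dstepFlip:
  assumes X: "\<not> left_wins TB X p True" and pTB: "p \<le> TB"
  and pos: "\<And>X' q lm. X' |\<in>| lopts X \<or> X' |\<in>| ropts X \<Longrightarrow> q \<le> TB \<Longrightarrow> \<not> left_wins TB X' q lm \<Longrightarrow> \<not> left_wins TB (gsum Y X') q lm"
  and tmp: "YR |\<in>| ropts Y" "\<not> left_wins TB (gsum YR X) p True"
  and lY: "\<And>YL l. YL |\<in>| lopts Y \<Longrightarrow> 0 < l \<Longrightarrow> l \<le> p \<Longrightarrow> \<not> left_wins TB (gsum YL X) (p - l) False"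
  shows "\<not> left_wins TB (gsum Y X) p False"
  unfolding nlwF
proof (intro allI impI)
  fix l assume l: "l \<le> p"
  then obtain r0 where r0: "r0 \<le> TB - p" and H: "\<not> cT TB X p l r0" using X unfolding nlwT by blast
  have lopt: "\<not> cF TB (gsum Y X) p l r" if "r < l" and HL: "\<And>g. g |\<in>| lopts X \<Longrightarrow> \<not> left_wins TB g (p - l) False" for r
  proof -
    have "\<not> left_wins TB g (p - l) False" if g: "g |\<in>| lopts (gsum Y X)" for g
    proof (rule lopts_cases[OF g])
      fix YL assume "YL |\<in>| lopts Y" "g = gsum YL X"
      then show ?thesis using lY[of YL l] \<open>r < l\<close> l by auto
    next
      fix XL assume "XL |\<in>| lopts X" "g = gsum Y XL"
      then show ?thesis using pos[of XL "p - l"] HL pTB by auto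
    qed
    then show ?thesis unfolding cF_gt[OF \<open>r < l\<close>] by blast
  qed
  show "\<exists>r\<le>TB - p. \<not> cF TB (gsum Y X) p l r"
  proof (cases r0 l rule: three_cases)
    case 1
    have "\<not> left_wins TB g (p - l) False" if "g |\<in>| lopts X" for g
      using H that unfolding cT_lt[OF 1] by blast
    then show ?thesis using lopt[OF 1] r0 by blast
  next
    case 2
    show ?thesis
    proof (cases "l = 0")
      case True
      have "\<not> cF TB (gsum Y X) p l 0" unfolding cF_eq[of 0 l, OF True[symmetric]]
        using mem_r1[OF tmp(1)] tmp(2) by auto
      then show ?thesis by blast
    next
      case False
      have "\<not> left_wins TB g (p - l) False" if "g |\<in>| lopts X" for g
        using H that unfolding cT_eq[OF 2] by blast
      then have "\<not> cF TB (gsum Y X) p l (l - 1)" using lopt[of "l - 1"] False by auto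
      moreover have "l - 1 \<le> TB - p" using r0 2 by auto
      ultimately show ?thesis by blast
    qed
  next
    case 3
    then obtain g where g: "g |\<in>| ropts X" "\<not> left_wins TB g (p + r0) True"
      using H unfolding cT_gt[OF 3] by blast
    then have "\<not> left_wins TB (gsum Y g) (p + r0) True"
      using pos[of g "p + r0"] pTB r0 by auto
    then have "\<not> cF TB (gsum Y X) p l r0" unfolding cF_lt[OF 3] using mem_r2[OF g(1)] by blast
    then show ?thesis using r0 by blast
  qed
qed

lemma ge_app: "game_ge TB A B \<Longrightarrow> p \<le> TB \<Longrightarrow> left_wins TB (gsum (gsum B C) X) p lm \<Longrightarrow> left_wins TB (gsum (gsum A C) X) p lm"
  by (simp add: game_ge_def gsum_assoc)
lemma ge_napp: "game_ge TB A B \<Longrightarrow> p \<le> TB \<Longrightarrow> \<not> left_wins TB (gsum (gsum A C) X) p lm \<Longrightarrow> \<not> left_wins TB (gsum (gsum B C) X) p lm"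
  using ge_app by blast
lemma num_L: "is_number TB G \<Longrightarrow> GL |\<in>| lopts G \<Longrightarrow> game_ge TB G GL \<and> is_number TB GL"
proof -
  assume a: "is_number TB G" "GL |\<in>| lopts G"
  from a(1) have "(\<forall>g\<in>fset (lopts G). is_number TB g) \<and> (\<forall>gl\<in>fset (lopts G). game_less TB gl G)"
    by (subst (asm) is_number_unfold) blast
  then show ?thesis using a(2) unfolding game_less_def by blast
qed
lemma num_R: "is_number TB G \<Longrightarrow> GR |\<in>| ropts G \<Longrightarrow> game_ge TB GR G \<and> is_number TB GR"
proof -
  assume a: "is_number TB G" "GR |\<in>| ropts G"
  from a(1) have "(\<forall>g\<in>fset (ropts G). is_number TB g) \<and> (\<forall>gr\<in>fset (ropts G). game_less TB G gr)"
    by (subst (asm) is_number_unfold) blast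
  then show ?thesis using a(2) unfolding game_less_def by blast
qed
lemma ropts_conj_cases: "h |\<in>| ropts (conj_game G) \<Longrightarrow> (\<And>GL. GL |\<in>| lopts G \<Longrightarrow> h = conj_game GL \<Longrightarrow> P) \<Longrightarrow> P"
  by (auto simp: ropts_conj)
lemma lopts_conj_cases: "h |\<in>| lopts (conj_game G) \<Longrightarrow> (\<And>GR. GR |\<in>| ropts G \<Longrightarrow> h = conj_game GR \<Longrightarrow> P) \<Longrightarrow> P"
  by (auto simp: lopts_conj)
lemma mem_conjL: "GR |\<in>| ropts G \<Longrightarrow> conj_game GR |\<in>| lopts (conj_game G)" by (simp add: lopts_conj)
lemma mem_conjR: "GL |\<in>| lopts G \<Longrightarrow> conj_game GL |\<in>| ropts (conj_game G)" by (simp add: ropts_conj)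

lemma primal_inner:
  assumes num: "is_number TB G"
  and ihC: "\<And>H X p lm. H |\<in>| lopts G \<or> H |\<in>| ropts G \<Longrightarrow> p \<le> TB \<Longrightarrow> left_wins TB X p lm \<Longrightarrow> left_wins TB (gsum (gsum H (conj_game H)) X) p lm"
  and ihF: "\<And>H HL X q. H |\<in>| lopts G \<or> H |\<in>| ropts G \<Longrightarrow> HL |\<in>| lopts H \<Longrightarrow> q \<le> TB \<Longrightarrow> left_wins TB X q False \<Longrightarrow> left_wins TB (gsum (gsum H (conj_game HL)) X) q True"
  shows "p \<le> TB \<Longrightarrow>
    (left_wins TB X p True \<longrightarrow> left_wins TB (gsum (gsum G (conj_game G)) X) p True) \<and>
    (left_wins TB X p False \<longrightarrow> left_wins TB (gsum (gsum G (conj_game G)) X) p False) \<and>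
    (\<forall>GR. GR |\<in>| ropts G \<longrightarrow> left_wins TB X p False \<longrightarrow> left_wins TB (gsum (gsum GR (conj_game G)) X) p True) \<and>
    (\<forall>GL. GL |\<in>| lopts G \<longrightarrow> left_wins TB X p False \<longrightarrow> left_wins TB (gsum (gsum G (conj_game GL)) X) p True)"
proof (induction "size X" arbitrary: X p rule: less_induct)
  case less
  note IHX0 = less.hyps
  have IHX: "\<And>X' q lm. X' |\<in>| lopts X \<or> X' |\<in>| ropts X \<Longrightarrow> q \<le> TB \<Longrightarrow> left_wins TB X' q lm \<Longrightarrow> left_wins TB (gsum (gsum G (conj_game G)) X') q lm"
  proof -
    fix X' q lm assume a: "X' |\<in>| lopts X \<or> X' |\<in>| ropts X" "q \<le> TB" "left_wins TB X' q lm"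
    have "size X' < size X" using a(1) size_l size_r by blast
    from IHX0[OF this a(2)] a(3) show "left_wins TB (gsum (gsum G (conj_game G)) X') q lm"
      by (cases lm) auto
  qed
  from less.prems show ?case
  proof (induction "TB - p" arbitrary: p rule: less_induct)
    case less
    note IHp0 = less.hyps
    have pTB: "p \<le> TB" by fact
    have IHp: "
    (left_wins TB X (p + r) True \<longrightarrow> left_wins TB (gsum (gsum G (conj_game G)) X) (p + r) True) \<and>
    (left_wins TB X (p + r) False \<longrightarrow> left_wins TB (gsum (gsum G (conj_game G)) X) (p + r) False) \<and>
    (\<forall>GR. GR |\<in>| ropts G \<longrightarrow> left_wins TB X (p + r) False \<longrightarrow> left_wins TB (gsum (gsum GR (conj_game G)) X) (p + r) True) \<and>
    (\<forall>GL. GL |\<in>| lopts G \<longrightarrow> left_wins TB X (p + r) False \<longrightarrow> left_wins TB (gsum (gsum G (conj_game GL)) X) (p + r) True)" if r: "0 < r" "p + r \<le> TB" for r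
    proof -
      have lt: "TB - (p + r) < TB - p" using r by linarith
      show ?thesis using IHp0[OF lt r(2)] .
    qed
    have B2: "left_wins TB (gsum (gsum G (conj_game GL)) X) p True" if GL: "GL |\<in>| lopts G" and X: "left_wins TB X p False" for GL
    proof -
      have ngl: "game_ge TB G GL" using num_L[OF num GL] by blast
      show ?thesis
      proof (rule stepFlip[OF X pTB])
        fix X' q lm assume "X' |\<in>| lopts X \<or> X' |\<in>| ropts X" "q \<le> TB" "left_wins TB X' q lm"
        then show "left_wins TB (gsum (gsum G (conj_game GL)) X') q lm"
          using ihC[where H=GL and X=X' and p=q and lm=lm] GL ge_app[OF ngl] by blast
      next
        show "gsum GL (conj_game GL) |\<in>| lopts (gsum G (conj_game GL))" using mem_l1[OF GL] .
      next
        show "left_wins TB (gsum (gsum GL (conj_game GL)) X) p False" using ihC[where H=GL and X=X and p=p and lm=False] GL pTB X by blast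
      next
        fix YR r assume YR: "YR |\<in>| ropts (gsum G (conj_game GL))" and r: "0 < r" "p + r \<le> TB"
        have Xr: "left_wins TB X (p + r) False" using lw_mono[OF _ r(2) X] by simp
        show "left_wins TB (gsum YR X) (p + r) True"
        proof (rule ropts_cases[OF YR])
          fix GR assume GR: "GR |\<in>| ropts G" and e: "YR = gsum GR (conj_game GL)"
          have "left_wins TB (gsum (gsum G (conj_game GL)) X) (p + r) True" using IHp[OF r] GL Xr by blast
          then show ?thesis using ge_app[OF conjunct1[OF num_R[OF num GR]] r(2)] e by blast
        next
          fix h assume h: "h |\<in>| ropts (conj_game GL)" and e: "YR = gsum G h"
          show ?thesis
          proof (rule ropts_conj_cases[OF h])
            fix GLL assume GLL: "GLL |\<in>| lopts GL" and e2: "h = conj_game GLL"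
            have "left_wins TB (gsum (gsum GL (conj_game GLL)) X) (p + r) True" using ihF[where H=GL and HL=GLL and X=X and q="p + r"] GL GLL r Xr by blast
            then show ?thesis using ge_app[OF ngl r(2)] e e2 by (simp add: gsum_assoc)
          qed
        qed
      qed
    qed
    have B1: "left_wins TB (gsum (gsum GR (conj_game G)) X) p True" if GR: "GR |\<in>| ropts G" and X: "left_wins TB X p False" for GR
    proof -
      have ngr: "game_ge TB GR G" and nGR: "is_number TB GR" using num_R[OF num GR] by blast+
      show ?thesis
      proof (rule stepFlip[OF X pTB])
        fix X' q lm assume "X' |\<in>| lopts X \<or> X' |\<in>| ropts X" "q \<le> TB" "left_wins TB X' q lm"
        then show "left_wins TB (gsum (gsum GR (conj_game G)) X') q lm"
          using IHX[of X' q lm] ge_app[OF ngr] by blast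
      next
        show "gsum GR (conj_game GR) |\<in>| lopts (gsum GR (conj_game G))" using mem_l2[OF mem_conjL[OF GR]] .
      next
        show "left_wins TB (gsum (gsum GR (conj_game GR)) X) p False" using ihC[where H=GR and X=X and p=p and lm=False] GR pTB X by blast
      next
        fix YR r assume YR: "YR |\<in>| ropts (gsum GR (conj_game G))" and r: "0 < r" "p + r \<le> TB"
        have Xr: "left_wins TB X (p + r) False" using lw_mono[OF _ r(2) X] by simp
        show "left_wins TB (gsum YR X) (p + r) True"
        proof (rule ropts_cases[OF YR])
          fix GRR assume GRR: "GRR |\<in>| ropts GR" and e: "YR = gsum GRR (conj_game G)"
          have "left_wins TB (gsum (gsum GR (conj_game G)) X) (p + r) True" using IHp[OF r] GR Xr by blast
          then show ?thesis using ge_app[OF conjunct1[OF num_R[OF nGR GRR]] r(2)] e by blast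
        next
          fix h assume h: "h |\<in>| ropts (conj_game G)" and e: "YR = gsum GR h"
          show ?thesis
          proof (rule ropts_conj_cases[OF h])
            fix GL assume GL: "GL |\<in>| lopts G" and e2: "h = conj_game GL"
            have "left_wins TB (gsum (gsum G (conj_game GL)) X) (p + r) True" using IHp[OF r] GL Xr by blast
            then show ?thesis using ge_app[OF ngr r(2)] e e2 by (simp add: gsum_assoc)
          qed
        qed
      qed
    qed
    have AT: "left_wins TB (gsum (gsum G (conj_game G)) X) p True" if X: "left_wins TB X p True"
    proof (rule stepA_T[OF X pTB])
      fix X' q lm assume "X' |\<in>| lopts X \<or> X' |\<in>| ropts X" "q \<le> TB" "left_wins TB X' q lm"
      then show "left_wins TB (gsum (gsum G (conj_game G)) X') q lm" using IHX by blast
    next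
      fix YR r assume YR: "YR |\<in>| ropts (gsum G (conj_game G))" and r: "0 < r" "p + r \<le> TB"
      have Xr: "left_wins TB X (p + r) True" using lw_mono[OF _ r(2) X] by simp
      show "left_wins TB (gsum YR X) (p + r) True"
      proof (rule ropts_cases[OF YR])
        fix GR assume GR: "GR |\<in>| ropts G" and e: "YR = gsum GR (conj_game G)"
        have "left_wins TB (gsum (gsum G (conj_game G)) X) (p + r) True" using IHp[OF r] Xr by blast
        then show ?thesis using ge_app[OF conjunct1[OF num_R[OF num GR]] r(2)] e by blast
      next
        fix h assume h: "h |\<in>| ropts (conj_game G)" and e: "YR = gsum G h"
        show ?thesis
        proof (rule ropts_conj_cases[OF h])
          fix GL assume GL: "GL |\<in>| lopts G" and e2: "h = conj_game GL"
          have "left_wins TB (gsum (gsum GL (conj_game GL)) X) (p + r) True" using ihC[where H=GL and X=X and p="p + r" and lm=True] GL r Xr by blast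
          then show ?thesis using ge_app[OF conjunct1[OF num_L[OF num GL]] r(2)] e e2 by (simp add: gsum_assoc)
        qed
      qed
    qed
    have AF: "left_wins TB (gsum (gsum G (conj_game G)) X) p False" if X: "left_wins TB X p False"
    proof (rule stepA_F[OF X pTB])
      fix X' q lm assume "X' |\<in>| lopts X \<or> X' |\<in>| ropts X" "q \<le> TB" "left_wins TB X' q lm"
      then show "left_wins TB (gsum (gsum G (conj_game G)) X') q lm" using IHX by blast
    next
      fix YR r assume YR: "YR |\<in>| ropts (gsum G (conj_game G))" and r: "p + r \<le> TB"
      have Xr: "left_wins TB X (p + r) False" using lw_mono[OF _ r X] by simp
      have B1r: "left_wins TB (gsum (gsum GR (conj_game G)) X) (p + r) True" if GR: "GR |\<in>| ropts G" for GR
      proof (cases "r = 0")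
        case True then show ?thesis using B1[OF GR X] by simp
      next
        case False then show ?thesis using IHp[of r] r GR Xr by blast
      qed
      have B2r: "left_wins TB (gsum (gsum G (conj_game GL)) X) (p + r) True" if GL: "GL |\<in>| lopts G" for GL
      proof (cases "r = 0")
        case True then show ?thesis using B2[OF GL X] by simp
      next
        case False then show ?thesis using IHp[of r] r GL Xr by blast
      qed
      show "left_wins TB (gsum YR X) (p + r) True"
      proof (rule ropts_cases[OF YR])
        fix GR assume GR: "GR |\<in>| ropts G" and e: "YR = gsum GR (conj_game G)"
        then show ?thesis using B1r[OF GR] by (simp add: gsum_assoc)
      next
        fix h assume h: "h |\<in>| ropts (conj_game G)" and e: "YR = gsum G h"
        show ?thesis
        proof (rule ropts_conj_cases[OF h])
          fix GL assume GL: "GL |\<in>| lopts G" and e2: "h = conj_game GL"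
          then show ?thesis using B2r[OF GL] e by (simp add: gsum_assoc)
        qed
      qed
    next
      fix YR r assume YR: "YR |\<in>| ropts (gsum G (conj_game G))" and r: "0 < r" "p + r \<le> TB"
      have Xr: "left_wins TB X (p + r) False" using lw_mono[OF _ r(2) X] by simp
      show "left_wins TB (gsum YR X) (p + r) False"
      proof (rule ropts_cases[OF YR])
        fix GR assume GR: "GR |\<in>| ropts G" and e: "YR = gsum GR (conj_game G)"
        have "left_wins TB (gsum (gsum G (conj_game G)) X) (p + r) False" using IHp[OF r] Xr by blast
        then show ?thesis using ge_app[OF conjunct1[OF num_R[OF num GR]] r(2)] e by blast
      next
        fix h assume h: "h |\<in>| ropts (conj_game G)" and e: "YR = gsum G h"
        show ?thesis
        proof (rule ropts_conj_cases[OF h])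
          fix GL assume GL: "GL |\<in>| lopts G" and e2: "h = conj_game GL"
          have "left_wins TB (gsum (gsum GL (conj_game GL)) X) (p + r) False" using ihC[where H=GL and X=X and p="p + r" and lm=False] GL r Xr by blast
          then show ?thesis using ge_app[OF conjunct1[OF num_L[OF num GL]] r(2)] e e2 by (simp add: gsum_assoc)
        qed
      qed
    qed
    show ?case using AT AF B1 B2 by blast
  qed
qed

lemma nmono: "q \<le> p \<Longrightarrow> p \<le> TB \<Longrightarrow> \<not> left_wins TB X p lm \<Longrightarrow> \<not> left_wins TB X q lm"
  using lw_mono by blast

lemma dual_inner:
  assumes num: "is_number TB G"
  and ihC: "\<And>H X p lm. H |\<in>| lopts G \<or> H |\<in>| ropts G \<Longrightarrow> p \<le> TB \<Longrightarrow> \<not> left_wins TB X p lm \<Longrightarrow> \<not> left_wins TB (gsum (gsum H (conj_game H)) X) p lm"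
  and ihF: "\<And>H HR X q. H |\<in>| lopts G \<or> H |\<in>| ropts G \<Longrightarrow> HR |\<in>| ropts H \<Longrightarrow> q \<le> TB \<Longrightarrow> \<not> left_wins TB X q True \<Longrightarrow> \<not> left_wins TB (gsum (gsum H (conj_game HR)) X) q False"
  shows "p \<le> TB \<Longrightarrow>
    (\<not> left_wins TB X p True \<longrightarrow> \<not> left_wins TB (gsum (gsum G (conj_game G)) X) p True) \<and>
    (\<not> left_wins TB X p False \<longrightarrow> \<not> left_wins TB (gsum (gsum G (conj_game G)) X) p False) \<and>
    (\<forall>GL. GL |\<in>| lopts G \<longrightarrow> \<not> left_wins TB X p True \<longrightarrow> \<not> left_wins TB (gsum (gsum GL (conj_game G)) X) p False) \<and>
    (\<forall>GR. GR |\<in>| ropts G \<longrightarrow> \<not> left_wins TB X p True \<longrightarrow> \<not> left_wins TB (gsum (gsum G (conj_game GR)) X) p False)"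
proof (induction "size X" arbitrary: X p rule: less_induct)
  case less
  note IHX0 = less.hyps
  have IHX: "\<And>X' q lm. X' |\<in>| lopts X \<or> X' |\<in>| ropts X \<Longrightarrow> q \<le> TB \<Longrightarrow> \<not> left_wins TB X' q lm \<Longrightarrow> \<not> left_wins TB (gsum (gsum G (conj_game G)) X') q lm"
  proof -
    fix X' q lm assume a: "X' |\<in>| lopts X \<or> X' |\<in>| ropts X" "q \<le> TB" "\<not> left_wins TB X' q lm"
    have "size X' < size X" using a(1) size_l size_r by blast
    from IHX0[OF this a(2)] a(3) show "\<not> left_wins TB (gsum (gsum G (conj_game G)) X') q lm"
      by (cases lm) auto
  qed
  from less.prems show ?case
  proof (induction p rule: less_induct)
    case (less p)
    note IHp0 = less.IH
    have pTB: "p \<le> TB" by fact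
    have IHp: "
    (\<not> left_wins TB X (p - l) True \<longrightarrow> \<not> left_wins TB (gsum (gsum G (conj_game G)) X) (p - l) True) \<and>
    (\<not> left_wins TB X (p - l) False \<longrightarrow> \<not> left_wins TB (gsum (gsum G (conj_game G)) X) (p - l) False) \<and>
    (\<forall>GL. GL |\<in>| lopts G \<longrightarrow> \<not> left_wins TB X (p - l) True \<longrightarrow> \<not> left_wins TB (gsum (gsum GL (conj_game G)) X) (p - l) False) \<and>
    (\<forall>GR. GR |\<in>| ropts G \<longrightarrow> \<not> left_wins TB X (p - l) True \<longrightarrow> \<not> left_wins TB (gsum (gsum G (conj_game GR)) X) (p - l) False)" if l: "0 < l" "l \<le> p" for l
    proof -
      have lt: "p - l < p" using l by linarith
      have le: "p - l \<le> TB" using pTB by linarith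
      show ?thesis using IHp0[OF lt le] .
    qed
    have B2: "\<not> left_wins TB (gsum (gsum G (conj_game GR)) X) p False" if GR: "GR |\<in>| ropts G" and X: "\<not> left_wins TB X p True" for GR
    proof -
      have ngr: "game_ge TB GR G" using num_R[OF num GR] by blast
      show ?thesis
      proof (rule dstepFlip[OF X pTB])
        fix X' q lm assume "X' |\<in>| lopts X \<or> X' |\<in>| ropts X" "q \<le> TB" "\<not> left_wins TB X' q lm"
        then show "\<not> left_wins TB (gsum (gsum G (conj_game GR)) X') q lm"
          using ihC[where H=GR and X=X' and p=q and lm=lm] GR ge_napp[OF ngr] by blast
      next
        show "gsum GR (conj_game GR) |\<in>| ropts (gsum G (conj_game GR))" using mem_r1[OF GR] .
      next
        show "\<not> left_wins TB (gsum (gsum GR (conj_game GR)) X) p True" using ihC[where H=GR and X=X and p=p and lm=True] GR pTB X by blast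
      next
        fix YL l assume YL: "YL |\<in>| lopts (gsum G (conj_game GR))" and l: "0 < l" "l \<le> p"
        have le: "p - l \<le> TB" using pTB by linarith
        have Xl: "\<not> left_wins TB X (p - l) True" using nmono[OF _ pTB X] by simp
        show "\<not> left_wins TB (gsum YL X) (p - l) False"
        proof (rule lopts_cases[OF YL])
          fix GL assume GL: "GL |\<in>| lopts G" and e: "YL = gsum GL (conj_game GR)"
          have "\<not> left_wins TB (gsum (gsum G (conj_game GR)) X) (p - l) False" using IHp[OF l] GR Xl by blast
          then show ?thesis using ge_napp[OF conjunct1[OF num_L[OF num GL]] le] e by blast
        next
          fix h assume h: "h |\<in>| lopts (conj_game GR)" and e: "YL = gsum G h"
          show ?thesis
          proof (rule lopts_conj_cases[OF h])
            fix GRR assume GRR: "GRR |\<in>| ropts GR" and e2: "h = conj_game GRR"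
            have "\<not> left_wins TB (gsum (gsum GR (conj_game GRR)) X) (p - l) False" using ihF[where H=GR and HR=GRR and X=X and q="p - l"] GR GRR le Xl by blast
            then show ?thesis using ge_napp[OF ngr le] e e2 by (simp add: gsum_assoc)
          qed
        qed
      qed
    qed
    have B1: "\<not> left_wins TB (gsum (gsum GL (conj_game G)) X) p False" if GL: "GL |\<in>| lopts G" and X: "\<not> left_wins TB X p True" for GL
    proof -
      have ngl: "game_ge TB G GL" and nGL: "is_number TB GL" using num_L[OF num GL] by blast+
      show ?thesis
      proof (rule dstepFlip[OF X pTB])
        fix X' q lm assume "X' |\<in>| lopts X \<or> X' |\<in>| ropts X" "q \<le> TB" "\<not> left_wins TB X' q lm"
        then show "\<not> left_wins TB (gsum (gsum GL (conj_game G)) X') q lm"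
          using IHX[of X' q lm] ge_napp[OF ngl] by blast
      next
        show "gsum GL (conj_game GL) |\<in>| ropts (gsum GL (conj_game G))" using mem_r2[OF mem_conjR[OF GL]] .
      next
        show "\<not> left_wins TB (gsum (gsum GL (conj_game GL)) X) p True" using ihC[where H=GL and X=X and p=p and lm=True] GL pTB X by blast
      next
        fix YL l assume YL: "YL |\<in>| lopts (gsum GL (conj_game G))" and l: "0 < l" "l \<le> p"
        have le: "p - l \<le> TB" using pTB by linarith
        have Xl: "\<not> left_wins TB X (p - l) True" using nmono[OF _ pTB X] by simp
        show "\<not> left_wins TB (gsum YL X) (p - l) False"
        proof (rule lopts_cases[OF YL])
          fix GLL assume GLL: "GLL |\<in>| lopts GL" and e: "YL = gsum GLL (conj_game G)"
          have "\<not> left_wins TB (gsum (gsum GL (conj_game G)) X) (p - l) False" using IHp[OF l] GL Xl by blast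
          then show ?thesis using ge_napp[OF conjunct1[OF num_L[OF nGL GLL]] le] e by blast
        next
          fix h assume h: "h |\<in>| lopts (conj_game G)" and e: "YL = gsum GL h"
          show ?thesis
          proof (rule lopts_conj_cases[OF h])
            fix GR assume GR: "GR |\<in>| ropts G" and e2: "h = conj_game GR"
            have "\<not> left_wins TB (gsum (gsum G (conj_game GR)) X) (p - l) False" using IHp[OF l] GR Xl by blast
            then show ?thesis using ge_napp[OF ngl le] e e2 by (simp add: gsum_assoc)
          qed
        qed
      qed
    qed
    have AF: "\<not> left_wins TB (gsum (gsum G (conj_game G)) X) p False" if X: "\<not> left_wins TB X p False"
    proof (rule dstepA_F[OF X pTB])
      fix X' q lm assume "X' |\<in>| lopts X \<or> X' |\<in>| ropts X" "q \<le> TB" "\<not> left_wins TB X' q lm"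
      then show "\<not> left_wins TB (gsum (gsum G (conj_game G)) X') q lm" using IHX by blast
    next
      fix YL l assume YL: "YL |\<in>| lopts (gsum G (conj_game G))" and l: "0 < l" "l \<le> p"
      have le: "p - l \<le> TB" using pTB by linarith
      have Xl: "\<not> left_wins TB X (p - l) False" using nmono[OF _ pTB X] by simp
      show "\<not> left_wins TB (gsum YL X) (p - l) False"
      proof (rule lopts_cases[OF YL])
        fix GL assume GL: "GL |\<in>| lopts G" and e: "YL = gsum GL (conj_game G)"
        have "\<not> left_wins TB (gsum (gsum G (conj_game G)) X) (p - l) False" using IHp[OF l] Xl by blast
        then show ?thesis using ge_napp[OF conjunct1[OF num_L[OF num GL]] le] e by blast
      next
        fix h assume h: "h |\<in>| lopts (conj_game G)" and e: "YL = gsum G h"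
        show ?thesis
        proof (rule lopts_conj_cases[OF h])
          fix GR assume GR: "GR |\<in>| ropts G" and e2: "h = conj_game GR"
          have "\<not> left_wins TB (gsum (gsum GR (conj_game GR)) X) (p - l) False" using ihC[where H=GR and X=X and p="p - l" and lm=False] GR le Xl by blast
          then show ?thesis using ge_napp[OF conjunct1[OF num_R[OF num GR]] le] e e2 by (simp add: gsum_assoc)
        qed
      qed
    qed
    have AT: "\<not> left_wins TB (gsum (gsum G (conj_game G)) X) p True" if X: "\<not> left_wins TB X p True"
    proof (rule dstepA_T[OF X pTB])
      fix X' q lm assume "X' |\<in>| lopts X \<or> X' |\<in>| ropts X" "q \<le> TB" "\<not> left_wins TB X' q lm"
      then show "\<not> left_wins TB (gsum (gsum G (conj_game G)) X') q lm" using IHX by blast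
    next
      fix YL l assume YL: "YL |\<in>| lopts (gsum G (conj_game G))" and l: "l \<le> p"
      have Xl: "\<not> left_wins TB X (p - l) True" using nmono[OF _ pTB X] by simp
      have B1l: "\<not> left_wins TB (gsum (gsum GL (conj_game G)) X) (p - l) False" if GL: "GL |\<in>| lopts G" for GL
      proof (cases "l = 0")
        case True then show ?thesis using B1[OF GL X] by simp
      next
        case False then show ?thesis using IHp[of l] l GL Xl by blast
      qed
      have B2l: "\<not> left_wins TB (gsum (gsum G (conj_game GR)) X) (p - l) False" if GR: "GR |\<in>| ropts G" for GR
      proof (cases "l = 0")
        case True then show ?thesis using B2[OF GR X] by simp
      next
        case False then show ?thesis using IHp[of l] l GR Xl by blast
      qed
      show "\<not> left_wins TB (gsum YL X) (p - l) False"
      proof (rule lopts_cases[OF YL])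
        fix GL assume GL: "GL |\<in>| lopts G" and e: "YL = gsum GL (conj_game G)"
        then show ?thesis using B1l[OF GL] by (simp add: gsum_assoc)
      next
        fix h assume h: "h |\<in>| lopts (conj_game G)" and e: "YL = gsum G h"
        show ?thesis
        proof (rule lopts_conj_cases[OF h])
          fix GR assume GR: "GR |\<in>| ropts G" and e2: "h = conj_game GR"
          then show ?thesis using B2l[OF GR] e by (simp add: gsum_assoc)
        qed
      qed
    next
      fix YL l assume YL: "YL |\<in>| lopts (gsum G (conj_game G))" and l: "0 < l" "l \<le> p"
      have le: "p - l \<le> TB" using pTB by linarith
      have Xl: "\<not> left_wins TB X (p - l) True" using nmono[OF _ pTB X] by simp
      show "\<not> left_wins TB (gsum YL X) (p - l) True"
      proof (rule lopts_cases[OF YL])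
        fix GL assume GL: "GL |\<in>| lopts G" and e: "YL = gsum GL (conj_game G)"
        have "\<not> left_wins TB (gsum (gsum G (conj_game G)) X) (p - l) True" using IHp[OF l] Xl by blast
        then show ?thesis using ge_napp[OF conjunct1[OF num_L[OF num GL]] le] e by blast
      next
        fix h assume h: "h |\<in>| lopts (conj_game G)" and e: "YL = gsum G h"
        show ?thesis
        proof (rule lopts_conj_cases[OF h])
          fix GR assume GR: "GR |\<in>| ropts G" and e2: "h = conj_game GR"
          have "\<not> left_wins TB (gsum (gsum GR (conj_game GR)) X) (p - l) True" using ihC[where H=GR and X=X and p="p - l" and lm=True] GR le Xl by blast
          then show ?thesis using ge_napp[OF conjunct1[OF num_R[OF num GR]] le] e e2 by (simp add: gsum_assoc)
        qed
      qed
    qed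
    show ?case using AT AF B1 B2 by blast
  qed
qed

lemma primal: "is_number TB G \<Longrightarrow>
   (\<forall>X p lm. p \<le> TB \<longrightarrow> left_wins TB X p lm \<longrightarrow> left_wins TB (gsum (gsum G (conj_game G)) X) p lm) \<and>
   (\<forall>GL X q. GL |\<in>| lopts G \<longrightarrow> q \<le> TB \<longrightarrow> left_wins TB X q False \<longrightarrow> left_wins TB (gsum (gsum G (conj_game GL)) X) q True)"
proof (induction "size G" arbitrary: G rule: less_induct)
  case less
  have sub: "is_number TB H" "size H < size G" if "H |\<in>| lopts G \<or> H |\<in>| ropts G" for H
    using num_L[OF less.prems] num_R[OF less.prems] size_l size_r that by blast+
  have ihC: "left_wins TB (gsum (gsum H (conj_game H)) X) p lm"
    if "H |\<in>| lopts G \<or> H |\<in>| ropts G" "p \<le> TB" "left_wins TB X p lm" for H X p lm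
  proof -
    have "(\<forall>X p lm. p \<le> TB \<longrightarrow> left_wins TB X p lm \<longrightarrow> left_wins TB (gsum (gsum H (conj_game H)) X) p lm)"
      using less.hyps[OF sub(2)[OF that(1)] sub(1)[OF that(1)]] by blast
    then show ?thesis using that by blast
  qed
  have ihF: "left_wins TB (gsum (gsum H (conj_game HL)) X) q True"
    if "H |\<in>| lopts G \<or> H |\<in>| ropts G" "HL |\<in>| lopts H" "q \<le> TB" "left_wins TB X q False" for H HL X q
  proof -
    have "(\<forall>GL X q. GL |\<in>| lopts H \<longrightarrow> q \<le> TB \<longrightarrow> left_wins TB X q False \<longrightarrow> left_wins TB (gsum (gsum H (conj_game GL)) X) q True)"
      using less.hyps[OF sub(2)[OF that(1)] sub(1)[OF that(1)]] by blast
    then show ?thesis using that by blast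
  qed
  note main = primal_inner[OF less.prems ihC ihF]
  show ?case
  proof (intro conjI allI impI)
    fix X p lm assume "p \<le> TB" "left_wins TB X p lm"
    then show "left_wins TB (gsum (gsum G (conj_game G)) X) p lm" using main[of p X] by (cases lm) auto
  next
    fix GL X q assume "GL |\<in>| lopts G" "q \<le> TB" "left_wins TB X q False"
    then show "left_wins TB (gsum (gsum G (conj_game GL)) X) q True" using main[of q X] by blast
  qed
qed

lemma dual: "is_number TB G \<Longrightarrow>
   (\<forall>X p lm. p \<le> TB \<longrightarrow> \<not> left_wins TB X p lm \<longrightarrow> \<not> left_wins TB (gsum (gsum G (conj_game G)) X) p lm) \<and>
   (\<forall>GR X q. GR |\<in>| ropts G \<longrightarrow> q \<le> TB \<longrightarrow> \<not> left_wins TB X q True \<longrightarrow> \<not> left_wins TB (gsum (gsum G (conj_game GR)) X) q False)"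
proof (induction "size G" arbitrary: G rule: less_induct)
  case less
  have sub: "is_number TB H" "size H < size G" if "H |\<in>| lopts G \<or> H |\<in>| ropts G" for H
    using num_L[OF less.prems] num_R[OF less.prems] size_l size_r that by blast+
  have ihC: "\<not> left_wins TB (gsum (gsum H (conj_game H)) X) p lm"
    if "H |\<in>| lopts G \<or> H |\<in>| ropts G" "p \<le> TB" "\<not> left_wins TB X p lm" for H X p lm
  proof -
    have "(\<forall>X p lm. p \<le> TB \<longrightarrow> \<not> left_wins TB X p lm \<longrightarrow> \<not> left_wins TB (gsum (gsum H (conj_game H)) X) p lm)"
      using less.hyps[OF sub(2)[OF that(1)] sub(1)[OF that(1)]] by blast
    then show ?thesis using that by blast
  qed
  have ihF: "\<not> left_wins TB (gsum (gsum H (conj_game HR)) X) q False"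
    if "H |\<in>| lopts G \<or> H |\<in>| ropts G" "HR |\<in>| ropts H" "q \<le> TB" "\<not> left_wins TB X q True" for H HR X q
  proof -
    have "(\<forall>GR X q. GR |\<in>| ropts H \<longrightarrow> q \<le> TB \<longrightarrow> \<not> left_wins TB X q True \<longrightarrow> \<not> left_wins TB (gsum (gsum H (conj_game GR)) X) q False)"
      using less.hyps[OF sub(2)[OF that(1)] sub(1)[OF that(1)]] by blast
    then show ?thesis using that by blast
  qed
  note main = dual_inner[OF less.prems ihC ihF]
  show ?case
  proof (intro conjI allI impI)
    fix X p lm assume "p \<le> TB" "\<not> left_wins TB X p lm"
    then show "\<not> left_wins TB (gsum (gsum G (conj_game G)) X) p lm" using main[of p X] by (cases lm) auto
  next
    fix GR X q assume "GR |\<in>| ropts G" "q \<le> TB" "\<not> left_wins TB X q True"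
    then show "\<not> left_wins TB (gsum (gsum G (conj_game GR)) X) q False" using main[of q X] by blast
  qed
qed

lemma rearr: "gsum (gsum G G') (gsum H X) = gsum (gsum G H) (gsum G' X)"
proof -
  have "gsum (gsum G G') (gsum H X) = gsum G (gsum G' (gsum H X))" by (rule gsum_assoc)
  also have "gsum G' (gsum H X) = gsum (gsum G' H) X" by (rule gsum_assoc[symmetric])
  also have "gsum G' H = gsum H G'" by (rule gsum_comm)
  also have "gsum (gsum H G') X = gsum H (gsum G' X)" by (rule gsum_assoc)
  also have "gsum G (gsum H (gsum G' X)) = gsum (gsum G H) (gsum G' X)" by (rule gsum_assoc[symmetric])
  finally show ?thesis .
qed

theorem mainTheorem8:
  fixes TB :: nat and G :: game
  assumes "is_number TB G"
  shows "game_eq TB (gsum G (conj_game G)) zero_game \<and>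
         (\<forall>G'. game_eq TB (gsum G G') zero_game \<longrightarrow> game_eq TB G' (conj_game G))"
proof -
  have P: "\<And>X p lm. p \<le> TB \<Longrightarrow> left_wins TB X p lm \<Longrightarrow> left_wins TB (gsum (gsum G (conj_game G)) X) p lm"
    using primal[OF assms] by blast
  have D: "\<And>X p lm. p \<le> TB \<Longrightarrow> left_wins TB (gsum (gsum G (conj_game G)) X) p lm \<Longrightarrow> left_wins TB X p lm"
    using dual[OF assms] by blast
  have eq0: "game_eq TB (gsum G (conj_game G)) zero_game"
    unfolding game_eq_def game_ge_def gsum_zero using P D by blast
  have uniq: "game_eq TB G' (conj_game G)" if H: "game_eq TB (gsum G G') zero_game" for G'
  proof -
    have H1: "\<And>X p lm. p \<le> TB \<Longrightarrow> left_wins TB X p lm \<Longrightarrow> left_wins TB (gsum (gsum G G') X) p lm"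
      using H unfolding game_eq_def game_ge_def gsum_zero by blast
    have H2: "\<And>X p lm. p \<le> TB \<Longrightarrow> left_wins TB (gsum (gsum G G') X) p lm \<Longrightarrow> left_wins TB X p lm"
      using H unfolding game_eq_def game_ge_def gsum_zero by blast
    have a: "game_ge TB G' (conj_game G)" unfolding game_ge_def
    proof (intro allI impI)
      fix X p lm assume p: "p \<le> TB" and w: "left_wins TB (gsum (conj_game G) X) p lm"
      have "left_wins TB (gsum (gsum G G') (gsum (conj_game G) X)) p lm" using H1[OF p w] .
      then have "left_wins TB (gsum (gsum G (conj_game G)) (gsum G' X)) p lm" by (simp only: rearr)
      then show "left_wins TB (gsum G' X) p lm" using D[OF p] by blast
    qed
    have b: "game_ge TB (conj_game G) G'" unfolding game_ge_def
    proof (intro allI impI)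
      fix X p lm assume p: "p \<le> TB" and w: "left_wins TB (gsum G' X) p lm"
      have "left_wins TB (gsum (gsum G (conj_game G)) (gsum G' X)) p lm" using P[OF p w] .
      then have "left_wins TB (gsum (gsum G G') (gsum (conj_game G) X)) p lm" by (simp only: rearr)
      then show "left_wins TB (gsum (conj_game G) X) p lm" using H2[OF p] by blast
    qed
    show ?thesis unfolding game_eq_def using a b by blast
  qed
  show ?thesis using eq0 uniq by blast
qed

end
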